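(* Fix $i\in[n]$ and $\mathbf{x}_{-i}\in\mathcal{C}_{-i}$, write $A=A(\mathbf{x}_{-i})$, and suppose $\mathbf{x}_i=(x_{ij})$ is a best response of player $i$, i.e. $\mathbf{x}_i\in\arg\max_{\mathbf{y}\in\vartheta_i(\mathbf{x}_{-i})}\mathcal{V}_i(\mathbf{y};\mathbf{x}_{-i})$. Then $(x_{ij})_{j\in A}$ is of one of the following two types. Type I: there is $J\subset A$ such that $x_{ij}=0$ for $j\in A\setminus J$, $\sum_{j\in J}x_{ij}<1$, and $(x_{ij})_{j\in J}$ is the unique solution (with $x_{ij}\in(0,\omega_{ij}-\mathbf{x}_T^{j|i})$) of the system $\psi_{ij}(x_{ij};\mathbf{x}_T^{j|i})=0$, $j\in J$. Type II: there are $J\subset A$ and a real $\kappa_0\ge0$ such that $x_{ij}=0$ for $j\in A\setminus J$, and $(x_{ij})_{j\in J}$ is given by the unique solution (with $x_{ij}\in(0,\omega_{ij}-\mathbf{x}_T^{j|i})$) of the system $\sum_{j\in J}x_{ij}=1$ and $x_{ij}^{a_i-1}\psi_{ij}(x_{ij};\mathbf{x}_T^{j|i})=\kappa_0$ for $j\in J$.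
   Context: Fragile multi-CPR Game: $n,m\ge1$, $[k]=\{1,\dots,k\}$, $C_m=\{(x_1,\dots,x_m)\in[0,1]^m:\sum_j x_j\le1\}$, $\mathcal{C}_{-i}=\prod_{[n]\setminus\{i\}}C_m$; for a profile $(\mathbf{x}_i,\mathbf{x}_{-i})$, $\mathbf{x}_\ell=(x_{\ell1},\dots,x_{\ell m})$, put $\mathbf{x}_T^{(j)}=\sum_{\ell}x_{\ell j}$ and $\mathbf{x}_T^{j|i}=\sum_{\ell\ne i}x_{\ell j}$. Each CPR $j$ has a return rate $\mathcal{R}_j(t)>1$ and failure probability $p_j(t)\in[0,1]$; each player $i$ has parameters $a_i,k_i$. Effective rate: $\mathcal{F}_{ij}(t)=(\mathcal{R}_j(t)-1)^{a_i}(1-p_j(t))-k_ip_j(t)$; utility $\mathcal{V}_i(\mathbf{x}_i;\mathbf{x}_{-i})=\sum_j x_{ij}^{a_i}\mathcal{F}_{ij}(\mathbf{x}_T^{(j)})$. Assumption: (1) $p_j(0)=0$, $p_j(t)=1$ for $t\ge1$; (2) $a_i\in(0,1]$, $k_i>0$; (3) each $\mathcal{F}_{ij}$ (continuous on $[0,1]$) has strictly negative first and second derivatives on $(0,1)$. Let $\omega_{ij}\in(0,1)$ be the unique zero of $\mathcal{F}_{ij}$ in $(0,1)$. Active CPRs: $A(\mathbf{x}_{-i})=\{j:\mathbf{x}_T^{j|i}<\omega_{ij}\}$. Constraint policy: $\vartheta_i(\mathbf{x}_{-i})=C_m\cap\big(\prod_{j\in A(\mathbf{x}_{-i})}[0,\omega_{ij}-\mathbf{x}_T^{j|i}]\times\prod_{j\notin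 A(\mathbf{x}_{-i})}\{0\}\big)$. Define $\psi_{ij}(x;s)=x\,\mathcal{F}_{ij}'(x+s)+a_i\mathcal{F}_{ij}(x+s)$. *)

theory Defs
  imports "HOL-Analysis.Analysis"
begin

definition Frate :: "(nat \<Rightarrow> real \<Rightarrow> real) \<Rightarrow> (nat \<Rightarrow> real \<Rightarrow> real) \<Rightarrow>
    (nat \<Rightarrow> real) \<Rightarrow> (nat \<Rightarrow> real) \<Rightarrow> nat \<Rightarrow> nat \<Rightarrow> real \<Rightarrow> real" where
  "Frate R p a k i j t = (R j t - 1) powr (a i) * (1 - p j t) - k i * p j t"

definition Csimplex :: "nat \<Rightarrow> (nat \<Rightarrow> real) set" where
  "Csimplex m = {z. (\<forall>j\<in>{1..m}. 0 \<le> z j \<and> z j \<le> 1) \<and> (\<Sum>j\<in>{1..m}. z j) \<le> 1}"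

definition others_total :: "nat \<Rightarrow> (nat \<Rightarrow> nat \<Rightarrow> real) \<Rightarrow> nat \<Rightarrow> nat \<Rightarrow> real" where
  "others_total n x i j = (\<Sum>l\<in>{1..n} - {i}. x l j)"

definition omega :: "(real \<Rightarrow> real) \<Rightarrow> real" where
  "omega F = (THE w. w \<in> {0<..<1} \<and> F w = 0)"

definition psi :: "(real \<Rightarrow> real) \<Rightarrow> real \<Rightarrow> real \<Rightarrow> real \<Rightarrow> real" where
  "psi F a x s = x * deriv F (x + s) + a * F (x + s)"

definition utility :: "(nat \<Rightarrow> real \<Rightarrow> real) \<Rightarrow> (nat \<Rightarrow> real \<Rightarrow> real) \<Rightarrow>
    (nat \<Rightarrow> real) \<Rightarrow> (nat \<Rightarrow> real) \<Rightarrow> nat \<Rightarrow> nat \<Rightarrow> nat \<Rightarrow>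
    (nat \<Rightarrow> nat \<Rightarrow> real) \<Rightarrow> (nat \<Rightarrow> real) \<Rightarrow> real" where
  "utility R p a k n m i x y =
     (\<Sum>j\<in>{1..m}. y j powr (a i) * Frate R p a k i j (y j + others_total n x i j))"

definition active :: "(nat \<Rightarrow> real \<Rightarrow> real) \<Rightarrow> (nat \<Rightarrow> real \<Rightarrow> real) \<Rightarrow>
    (nat \<Rightarrow> real) \<Rightarrow> (nat \<Rightarrow> real) \<Rightarrow> nat \<Rightarrow> nat \<Rightarrow> nat \<Rightarrow>
    (nat \<Rightarrow> nat \<Rightarrow> real) \<Rightarrow> nat set" where
  "active R p a k n m i x =
     {j\<in>{1..m}. others_total n x i j < omega (Frate R p a k i j)}"

definition constraint :: "(nat \<Rightarrow> real \<Rightarrow> real) \<Rightarrow> (nat \<Rightarrow> real \<Rightarrow> real) \<Rightarrow>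
    (nat \<Rightarrow> real) \<Rightarrow> (nat \<Rightarrow> real) \<Rightarrow> nat \<Rightarrow> nat \<Rightarrow> nat \<Rightarrow>
    (nat \<Rightarrow> nat \<Rightarrow> real) \<Rightarrow> (nat \<Rightarrow> real) set" where
  "constraint R p a k n m i x =
     Csimplex m \<inter>
     {z. \<forall>j\<in>{1..m}.
          (j \<in> active R p a k n m i x \<longrightarrow>
             0 \<le> z j \<and> z j \<le> omega (Frate R p a k i j) - others_total n x i j) \<and>
          (j \<notin> active R p a k n m i x \<longrightarrow> z j = 0)}"

end

theory Submission imports Defs begin

lemma cpr:
  fixes F :: "real \<Rightarrow> real" and a s :: real
  assumes cont: "continuous_on {0..1} F"
    and der: "\<exists>F1 F2. \<forall>t\<in>{0<..<1}. (F has_real_derivative F1 t) (at t) \<and>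
        (F1 has_real_derivative F2 t) (at t) \<and> F1 t < 0 \<and> F2 t < 0"
    and F0: "F 0 > 0" and Fone: "F 1 < 0"
    and a: "0 < a" "a \<le> 1" and s: "0 \<le> s" "s < omega F"
  shows "omega F < 1"
    "\<forall>t. 0 < t \<and> t < omega F - s \<longrightarrow>
        ((\<lambda>t. t powr a * F (t + s)) has_real_derivative t powr (a - 1) * psi F a t s) (at t)"
    "\<forall>t. 0 < t \<and> t < omega F - s \<longrightarrow> 0 < t powr a * F (t + s)"
    "F (omega F - s + s) = 0"
    "\<forall>t1 t2. 0 < t1 \<and> t1 < omega F - s \<and> 0 < t2 \<and> t2 < omega F - s \<and>
        psi F a t1 s = 0 \<and> psi F a t2 s = 0 \<longrightarrow> t1 = t2"
    "\<forall>t1 t2 \<kappa>. 0 \<le> \<kappa> \<and> 0 < t1 \<and> t1 < omega F - s \<and> 0 < t2 \<and> t2 < omega F - s \<and>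
        t1 powr (a - 1) * psi F a t1 s = \<kappa> \<and> t2 powr (a - 1) * psi F a t2 s = \<kappa> \<longrightarrow> t1 = t2"
proof -
  obtain F1 F2 where d: "\<forall>t\<in>{0<..<1}. (F has_real_derivative F1 t) (at t) \<and>
        (F1 has_real_derivative F2 t) (at t) \<and> F1 t < 0 \<and> F2 t < 0" using der by blast
  have dec: "F v < F u" if "0 \<le> u" "u < v" "v \<le> 1" for u v
  proof (rule DERIV_neg_imp_decreasing_open[OF that(2)])
    fix x assume "u < x" "x < v"
    then show "\<exists>y. DERIV F x :> y \<and> y < 0" using d that by force
  next
    show "continuous_on {u..v} F" using continuous_on_subset[OF cont] that by auto
  qed
  have dec1: "F1 v < F1 u" if "0 < u" "u < v" "v < 1" for u v
  proof (rule DERIV_neg_imp_decreasing[OF that(2)])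
    fix x assume "u \<le> x" "x \<le> v"
    then show "\<exists>y. DERIV F1 x :> y \<and> y < 0" using d that by force
  qed
  obtain w where w: "0 \<le> w" "w \<le> 1" "F w = 0"
    using IVT2'[of F 1 0 0] cont F0 Fone by force
  have w01: "0 < w" "w < 1" using w F0 Fone by (auto simp: order_le_less)
  have om: "omega F = w"
    unfolding omega_def
  proof (rule the_equality)
    show "w \<in> {0<..<1} \<and> F w = 0" using w01 w by auto
  next
    fix v assume v: "v \<in> {0<..<1} \<and> F v = 0"
    show "v = w"
    proof (rule ccontr)
      assume "v \<noteq> w"
      then consider "v < w" | "w < v" by linarith
      then show False using dec[of v w] dec[of w v] v w w01 by cases auto
    qed
  qed
  show "omega F < 1" using om w01 by simp
  show "F (omega F - s + s) = 0" using om w by simp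
  have dF: "(F has_real_derivative F1 u) (at u)" "deriv F u = F1 u" "F1 u < 0"
    if "0 < u" "u < 1" for u
    using d that DERIV_imp_deriv[of F "F1 u" u] by auto
  show "\<forall>t. 0 < t \<and> t < omega F - s \<longrightarrow>
        ((\<lambda>t. t powr a * F (t + s)) has_real_derivative t powr (a - 1) * psi F a t s) (at t)"
  proof (intro allI impI)
    fix t assume t: "0 < t \<and> t < omega F - s"
    have u: "0 < t + s" "t + s < 1" using t s om w01 by auto
    have d1: "((\<lambda>t. t powr a) has_real_derivative a * t powr (a - 1)) (at t)"
      using has_real_derivative_powr t by auto
    have d0: "((\<lambda>t. t + s) has_real_derivative 1) (at t)"
      by (auto intro!: derivative_eq_intros)
    have d2: "((\<lambda>t. F (t + s)) has_real_derivative F1 (t + s)) (at t)"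
      using DERIV_chain2[of F "F1 (t + s)" "\<lambda>t. t + s" t 1 UNIV] dF(1)[OF u] d0
      by simp
    have "((\<lambda>t. t powr a * F (t + s)) has_real_derivative
        a * t powr (a - 1) * F (t + s) + t powr a * F1 (t + s)) (at t)"
      using DERIV_mult[OF d1 d2] by (simp add: mult.commute)
    moreover have "a * t powr (a - 1) * F (t + s) + t powr a * F1 (t + s)
        = t powr (a - 1) * psi F a t s"
    proof -
      have "t powr a = t * t powr (a - 1)" using t powr_mult_base[of t "a - 1"] by auto
      then show ?thesis unfolding psi_def using dF(2)[OF u] by (simp add: algebra_simps)
    qed
    ultimately show "((\<lambda>t. t powr a * F (t + s)) has_real_derivative t powr (a - 1) * psi F a t s) (at t)"
      by simp
  qed
  show "\<forall>t. 0 < t \<and> t < omega F - s \<longrightarrow> 0 < t powr a * F (t + s)"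
  proof (intro allI impI)
    fix t assume t: "0 < t \<and> t < omega F - s"
    have "F w < F (t + s)" using dec[of "t+s" w] t s om w01 by auto
    then show "0 < t powr a * F (t + s)" using w t by simp
  qed
  have psidec: "psi F a t2 s < psi F a t1 s"
    if "0 < t1" "t1 < t2" "t2 < omega F - s" for t1 t2
  proof -
    have u: "0 < t1 + s" "t1 + s < t2 + s" "t2 + s < 1" using that s om w01 by auto
    have "F1 (t2 + s) < F1 (t1 + s)" using dec1 u by auto
    hence "t2 * F1 (t2 + s) < t2 * F1 (t1 + s)" using that by simp
    moreover have "t2 * F1 (t1 + s) < t1 * F1 (t1 + s)" using that dF(3)[of "t1+s"] u
      by (simp add: mult_strict_right_mono_neg)
    moreover have "a * F (t2 + s) < a * F (t1 + s)" using dec[of "t1+s" "t2+s"] u a by simp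
    ultimately show ?thesis unfolding psi_def using dF(2)[of "t1+s"] dF(2)[of "t2+s"] u by simp
  qed
  show "\<forall>t1 t2. 0 < t1 \<and> t1 < omega F - s \<and> 0 < t2 \<and> t2 < omega F - s \<and>
        psi F a t1 s = 0 \<and> psi F a t2 s = 0 \<longrightarrow> t1 = t2"
    by (metis psidec linorder_neqE_linordered_idom less_irrefl)
  have phidec: "t2 powr (a - 1) * psi F a t2 s < t1 powr (a - 1) * psi F a t1 s"
    if "0 < t1" "t1 < t2" "t2 < omega F - s" "0 \<le> psi F a t2 s" for t1 t2
  proof -
    have "t2 powr (a - 1) \<le> t1 powr (a - 1)" using powr_mono2'[of "a - 1" t1 t2] a that by simp
    hence "t2 powr (a - 1) * psi F a t2 s \<le> t1 powr (a - 1) * psi F a t2 s"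
      using that(4) by (simp add: mult_right_mono)
    also have "\<dots> < t1 powr (a - 1) * psi F a t1 s"
      using psidec[OF that(1-3)] that(1) by simp
    finally show ?thesis .
  qed
  show "\<forall>t1 t2 \<kappa>. 0 \<le> \<kappa> \<and> 0 < t1 \<and> t1 < omega F - s \<and> 0 < t2 \<and> t2 < omega F - s \<and>
        t1 powr (a - 1) * psi F a t1 s = \<kappa> \<and> t2 powr (a - 1) * psi F a t2 s = \<kappa> \<longrightarrow> t1 = t2"
  proof (intro allI impI)
    fix t1 t2 \<kappa> assume h: "0 \<le> \<kappa> \<and> 0 < t1 \<and> t1 < omega F - s \<and> 0 < t2 \<and> t2 < omega F - s \<and>
        t1 powr (a - 1) * psi F a t1 s = \<kappa> \<and> t2 powr (a - 1) * psi F a t2 s = \<kappa>"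
    have nn: "0 \<le> psi F a t s" if "0 < t" "t powr (a - 1) * psi F a t s = \<kappa>" for t
    proof -
      have "0 < t powr (a - 1)" using that by simp
      thus ?thesis using that h by (metis zero_le_mult_iff not_less)
    qed
    show "t1 = t2"
    proof (rule ccontr)
      assume "t1 \<noteq> t2"
      then consider "t1 < t2" | "t2 < t1" by linarith
      then show False using phidec[of t1 t2] phidec[of t2 t1] nn[of t1] nn[of t2] h by cases auto
    qed
  qed
qed


lemma sum_upd:
  fixes G :: "nat \<Rightarrow> real \<Rightarrow> real"
  assumes "finite S" "j \<in> S"
  shows "(\<Sum>l\<in>S. G l ((z(j := t)) l)) = (\<Sum>l\<in>S. G l (z l)) - G j (z j) + G j t"
proof -
  have "(\<Sum>l\<in>S. G l ((z(j := t)) l)) = G j t + (\<Sum>l\<in>S - {j}. G l ((z(j := t)) l))"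
    using sum.remove[OF assms, of "\<lambda>l. G l ((z(j := t)) l)"] by simp
  also have "(\<Sum>l\<in>S - {j}. G l ((z(j := t)) l)) = (\<Sum>l\<in>S - {j}. G l (z l))"
    by (rule sum.cong) auto
  also have "\<dots> = (\<Sum>l\<in>S. G l (z l)) - G j (z j)"
    using sum.remove[OF assms, of "\<lambda>l. G l (z l)"] by simp
  finally show ?thesis by simp
qed

lemma shift_deriv:
  fixes g :: "real \<Rightarrow> real"
  assumes "(g has_real_derivative D) (at c)"
  shows "((\<lambda>h. g (c + h)) has_real_derivative D) (at 0)"
    "((\<lambda>h. g (c - h)) has_real_derivative - D) (at 0)"
proof -
  have d0: "((\<lambda>h. c + h) has_real_derivative 1) (at 0)" by (auto intro!: derivative_eq_intros)
  show "((\<lambda>h. g (c + h)) has_real_derivative D) (at 0)"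
    using DERIV_chain2[of g D "\<lambda>h. c + h" 0 1 UNIV] assms d0 by simp
  have d1: "((\<lambda>h. c - h) has_real_derivative -1) (at 0)" by (auto intro!: derivative_eq_intros)
  show "((\<lambda>h. g (c - h)) has_real_derivative - D) (at 0)"
    using DERIV_chain2[of g D "\<lambda>h. c - h" 0 "-1" UNIV] assms d1 by simp
qed

theorem theorem8:
  fixes n m :: nat
    and R p :: "nat \<Rightarrow> real \<Rightarrow> real"
    and a k :: "nat \<Rightarrow> real"
    and i :: nat
    and x :: "nat \<Rightarrow> nat \<Rightarrow> real"
    and y :: "nat \<Rightarrow> real"
  assumes n: "n \<ge> 1" and m: "m \<ge> 1"
    and R_gt: "\<forall>j\<in>{1..m}. \<forall>t\<ge>0. R j t > 1"
    and p_range: "\<forall>j\<in>{1..m}. \<forall>t\<ge>0. 0 \<le> p j t \<and> p j t \<le> 1"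
    and p0: "\<forall>j\<in>{1..m}. p j 0 = 0"
    and p1: "\<forall>j\<in>{1..m}. \<forall>t\<ge>1. p j t = 1"
    and a_range: "\<forall>l\<in>{1..n}. 0 < a l \<and> a l \<le> 1"
    and k_pos: "\<forall>l\<in>{1..n}. k l > 0"
    and F_cont: "\<forall>l\<in>{1..n}. \<forall>j\<in>{1..m}. continuous_on {0..1} (Frate R p a k l j)"
    and F_deriv: "\<forall>l\<in>{1..n}. \<forall>j\<in>{1..m}. \<exists>F1 F2. \<forall>t\<in>{0<..<1}.
        (Frate R p a k l j has_real_derivative F1 t) (at t) \<and>
        (F1 has_real_derivative F2 t) (at t) \<and> F1 t < 0 \<and> F2 t < 0"
    and i: "i \<in> {1..n}"
    and x_others: "\<forall>l\<in>{1..n} - {i}. x l \<in> Csimplex m"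
    and y_feas: "y \<in> constraint R p a k n m i x"
    and y_best: "\<forall>z\<in>constraint R p a k n m i x.
        utility R p a k n m i x z \<le> utility R p a k n m i x y"
  shows
    "(\<exists>J. J \<subseteq> active R p a k n m i x \<and>
        (\<forall>j\<in>active R p a k n m i x - J. y j = 0) \<and>
        (\<Sum>j\<in>J. y j) < 1 \<and>
        (\<forall>j\<in>J. 0 < y j \<and> y j < omega (Frate R p a k i j) - others_total n x i j \<and>
           psi (Frate R p a k i j) (a i) (y j) (others_total n x i j) = 0) \<and>
        (\<forall>z. (\<forall>j\<in>J. 0 < z j \<and> z j < omega (Frate R p a k i j) - others_total n x i j \<and>
               psi (Frate R p a k i j) (a i) (z j) (others_total n x i j) = 0)
             \<longrightarrow> (\<forall>j\<in>J. z j = y j)))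
     \<or>
     (\<exists>J \<kappa>0. J \<subseteq> active R p a k n m i x \<and> \<kappa>0 \<ge> 0 \<and>
        (\<forall>j\<in>active R p a k n m i x - J. y j = 0) \<and>
        (\<Sum>j\<in>J. y j) = 1 \<and>
        (\<forall>j\<in>J. 0 < y j \<and> y j < omega (Frate R p a k i j) - others_total n x i j \<and>
           y j powr (a i - 1) * psi (Frate R p a k i j) (a i) (y j) (others_total n x i j) = \<kappa>0) \<and>
        (\<forall>z. ((\<Sum>j\<in>J. z j) = 1 \<and>
              (\<forall>j\<in>J. 0 < z j \<and> z j < omega (Frate R p a k i j) - others_total n x i j \<and>
               z j powr (a i - 1) * psi (Frate R p a k i j) (a i) (z j) (others_total n x i j) = \<kappa>0))
             \<longrightarrow> (\<forall>j\<in>J. z j = y j)))"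
  proof -
  define F where "F = Frate R p a k i"
  define s where "s = others_total n x i"
  define A where "A = active R p a k n m i x"
  define G where "G = (\<lambda>j t. t powr a i * F j (t + s j))"
  define S where "S = (\<Sum>j\<in>{1..m}. y j)"
  have U: "\<And>z. utility R p a k n m i x z = (\<Sum>j\<in>{1..m}. G j (z j))"
    unfolding utility_def G_def F_def s_def ..
  have A_eq: "A = {j\<in>{1..m}. s j < omega (F j)}"
    unfolding A_def active_def F_def s_def ..
  have s_nn: "0 \<le> s j" if "j \<in> {1..m}" for j
    unfolding s_def others_total_def using x_others that
    by (intro sum_nonneg) (auto simp: Csimplex_def)
  have ai: "0 < a i" "a i \<le> 1" using a_range i by auto
  have C: "omega (F j) < 1"
    "\<forall>t. 0 < t \<and> t < omega (F j) - s j \<longrightarrow>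
        (G j has_real_derivative t powr (a i - 1) * psi (F j) (a i) t (s j)) (at t)"
    "\<forall>t. 0 < t \<and> t < omega (F j) - s j \<longrightarrow> 0 < G j t"
    "G j (omega (F j) - s j) = 0"
    "\<forall>t1 t2. 0 < t1 \<and> t1 < omega (F j) - s j \<and> 0 < t2 \<and> t2 < omega (F j) - s j \<and>
        psi (F j) (a i) t1 (s j) = 0 \<and> psi (F j) (a i) t2 (s j) = 0 \<longrightarrow> t1 = t2"
    "\<forall>t1 t2 \<kappa>. 0 \<le> \<kappa> \<and> 0 < t1 \<and> t1 < omega (F j) - s j \<and> 0 < t2 \<and> t2 < omega (F j) - s j \<and>
        t1 powr (a i - 1) * psi (F j) (a i) t1 (s j) = \<kappa> \<and>
        t2 powr (a i - 1) * psi (F j) (a i) t2 (s j) = \<kappa> \<longrightarrow> t1 = t2"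
    if jA: "j \<in> A" for j
  proof -
    have jm: "j \<in> {1..m}" and sj: "s j < omega (F j)" using jA A_eq by auto
    have "R j 0 > 1" using R_gt jm by auto
    then have F0: "F j 0 > 0" using p0 jm unfolding F_def Frate_def by simp
    have F1: "F j 1 < 0" using p1 jm k_pos i unfolding F_def Frate_def by simp
    have cont: "continuous_on {0..1} (F j)" using F_cont i jm unfolding F_def by blast
    have der: "\<exists>F1 F2. \<forall>t\<in>{0<..<1}. (F j has_real_derivative F1 t) (at t) \<and>
        (F1 has_real_derivative F2 t) (at t) \<and> F1 t < 0 \<and> F2 t < 0"
      using F_deriv i jm unfolding F_def by blast
    note c = cpr[OF cont der F0 F1 ai s_nn[OF jm] sj]
    have G0: "G j (omega (F j) - s j) = 0" using c(4) unfolding G_def by simp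
    show "omega (F j) < 1" by (rule c(1))
    show "\<forall>t. 0 < t \<and> t < omega (F j) - s j \<longrightarrow>
        (G j has_real_derivative t powr (a i - 1) * psi (F j) (a i) t (s j)) (at t)"
      using c(2) unfolding G_def by simp
    show "\<forall>t. 0 < t \<and> t < omega (F j) - s j \<longrightarrow> 0 < G j t"
      using c(3) unfolding G_def by simp
    show "G j (omega (F j) - s j) = 0" by (rule G0)
    show "\<forall>t1 t2. 0 < t1 \<and> t1 < omega (F j) - s j \<and> 0 < t2 \<and> t2 < omega (F j) - s j \<and>
        psi (F j) (a i) t1 (s j) = 0 \<and> psi (F j) (a i) t2 (s j) = 0 \<longrightarrow> t1 = t2" by (rule c(5))
    show "\<forall>t1 t2 \<kappa>. 0 \<le> \<kappa> \<and> 0 < t1 \<and> t1 < omega (F j) - s j \<and> 0 < t2 \<and> t2 < omega (F j) - s j \<and>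
        t1 powr (a i - 1) * psi (F j) (a i) t1 (s j) = \<kappa> \<and>
        t2 powr (a i - 1) * psi (F j) (a i) t2 (s j) = \<kappa> \<longrightarrow> t1 = t2" by (rule c(6))
  qed
  have C_char: "z \<in> constraint R p a k n m i x \<longleftrightarrow>
      (\<forall>j\<in>{1..m}. 0 \<le> z j \<and> z j \<le> 1 \<and> (j \<in> A \<longrightarrow> z j \<le> omega (F j) - s j) \<and>
        (j \<notin> A \<longrightarrow> z j = 0)) \<and> (\<Sum>j\<in>{1..m}. z j) \<le> 1" for z
    unfolding constraint_def Csimplex_def A_def F_def s_def by auto
  have feas: "z \<in> constraint R p a k n m i x"
    if h: "\<forall>j\<in>{1..m}. 0 \<le> z j \<and> (j \<in> A \<longrightarrow> z j \<le> omega (F j) - s j) \<and> (j \<notin> A \<longrightarrow> z j = 0)"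
      and hs: "(\<Sum>j\<in>{1..m}. z j) \<le> 1" for z
  proof -
    have "z j \<le> 1" if "j \<in> {1..m}" for j
    proof (cases "j \<in> A")
      case True
      then show ?thesis using h that C(1)[OF True] s_nn[OF that] by force
    next
      case False
      then show ?thesis using h that by auto
    qed
    then show ?thesis using C_char h hs by auto
  qed
  have yc: "\<forall>j\<in>{1..m}. 0 \<le> y j \<and> y j \<le> 1 \<and> (j \<in> A \<longrightarrow> y j \<le> omega (F j) - s j) \<and>
        (j \<notin> A \<longrightarrow> y j = 0)" "S \<le> 1"
    using y_feas C_char S_def by auto
  have best: "(\<Sum>j\<in>{1..m}. G j (z j)) \<le> (\<Sum>j\<in>{1..m}. G j (y j))"
    if "z \<in> constraint R p a k n m i x" for z
    using y_best that U by metis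
  have Am: "A \<subseteq> {1..m}" using A_eq by auto
  have upd: "(\<Sum>l\<in>{1..m}. G l ((z(j := t)) l)) = (\<Sum>l\<in>{1..m}. G l (z l)) - G j (z j) + G j t"
     "(\<Sum>l\<in>{1..m}. (z(j := t)) l) = (\<Sum>l\<in>{1..m}. z l) - z j + t"
    if "j \<in> {1..m}" for j z t
    using sum_upd[of "{1..m}" j G z t] sum_upd[of "{1..m}" j "\<lambda>_ t. t" z t] that by auto
  define J where "J = {j\<in>A. 0 < y j}"
  have JA: "J \<subseteq> A" unfolding J_def by auto
  have zeroJ: "\<forall>j\<in>A - J. y j = 0" using yc Am unfolding J_def by force
  have sumJ: "(\<Sum>j\<in>J. y j) = S"
    unfolding S_def
  proof (rule sum.mono_neutral_left)
    show "\<forall>j\<in>{1..m} - J. y j = 0" using zeroJ yc by auto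
  qed (use JA Am in auto)
  have Jpos: "0 < y j" if "j \<in> J" for j using that J_def by auto
  have Jlt: "y j < omega (F j) - s j" if jJ: "j \<in> J" for j
  proof (rule ccontr)
    assume nlt: "\<not> y j < omega (F j) - s j"
    have jA: "j \<in> A" using jJ JA by auto
    have jm: "j \<in> {1..m}" using jA Am by auto
    have yeq: "y j = omega (F j) - s j" using nlt yc jm jA by force
    define t where "t = y j / 2"
    have t: "0 < t" "t < omega (F j) - s j" using Jpos[OF jJ] yeq t_def by auto
    have "y(j := t) \<in> constraint R p a k n m i x"
    proof (rule feas)
      show "\<forall>l\<in>{1..m}. 0 \<le> (y(j := t)) l \<and> (l \<in> A \<longrightarrow> (y(j := t)) l \<le> omega (F l) - s l) \<and>
          (l \<notin> A \<longrightarrow> (y(j := t)) l = 0)" using yc t jA by auto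
      show "(\<Sum>l\<in>{1..m}. (y(j := t)) l) \<le> 1" using upd(2)[OF jm] yc(2) t yeq S_def by auto
    qed
    from best[OF this] have "G j t \<le> G j (y j)" using upd(1)[OF jm] by simp
    moreover have "G j (y j) = 0" using C(4)[OF jA] yeq by simp
    moreover have "0 < G j t" using C(3)[OF jA] t by blast
    ultimately show False by simp
  qed
  have Jderiv: "(G j has_real_derivative y j powr (a i - 1) * psi (F j) (a i) (y j) (s j)) (at (y j))"
    if jJ: "j \<in> J" for j
    using C(2)[of j] JA jJ Jpos[OF jJ] Jlt[OF jJ] by blast
  have S_le: "S \<le> 1" using yc by simp
  show ?thesis
  proof (cases "S < 1")
    case True
    have psi0: "psi (F j) (a i) (y j) (s j) = 0" if jJ: "j \<in> J" for j
    proof -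
      have jA: "j \<in> A" using jJ JA by auto
      have jm: "j \<in> {1..m}" using jA Am by auto
      define d where "d = min (y j) (min (omega (F j) - s j - y j) (1 - S))"
      have d: "0 < d" using Jpos[OF jJ] Jlt[OF jJ] True d_def by auto
      have "\<forall>t. \<bar>y j - t\<bar> < d \<longrightarrow> G j t \<le> G j (y j)"
      proof (intro allI impI)
        fix t assume ht: "\<bar>y j - t\<bar> < d"
        have "y(j := t) \<in> constraint R p a k n m i x"
        proof (rule feas)
          show "\<forall>l\<in>{1..m}. 0 \<le> (y(j := t)) l \<and> (l \<in> A \<longrightarrow> (y(j := t)) l \<le> omega (F l) - s l) \<and>
              (l \<notin> A \<longrightarrow> (y(j := t)) l = 0)" using yc ht jA d_def by (auto simp: abs_less_iff)
          show "(\<Sum>l\<in>{1..m}. (y(j := t)) l) \<le> 1" using upd(2)[OF jm] ht d_def S_def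
            by (auto simp: abs_less_iff)
        qed
        from best[OF this] show "G j t \<le> G j (y j)" using upd(1)[OF jm] by simp
      qed
      from DERIV_local_max[OF Jderiv[OF jJ] d this]
      have "y j powr (a i - 1) * psi (F j) (a i) (y j) (s j) = 0" .
      moreover have "0 < y j powr (a i - 1)" using Jpos[OF jJ] by simp
      ultimately show ?thesis by simp
    qed
    have "J \<subseteq> A \<and> (\<forall>j\<in>A - J. y j = 0) \<and> (\<Sum>j\<in>J. y j) < 1 \<and>
        (\<forall>j\<in>J. 0 < y j \<and> y j < omega (F j) - s j \<and> psi (F j) (a i) (y j) (s j) = 0) \<and>
        (\<forall>z. (\<forall>j\<in>J. 0 < z j \<and> z j < omega (F j) - s j \<and> psi (F j) (a i) (z j) (s j) = 0)
             \<longrightarrow> (\<forall>j\<in>J. z j = y j))"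
    proof (intro conjI allI impI ballI)
      fix z j assume hz: "\<forall>j\<in>J. 0 < z j \<and> z j < omega (F j) - s j \<and> psi (F j) (a i) (z j) (s j) = 0"
        and jJ: "j \<in> J"
      have jA: "j \<in> A" using JA jJ by auto
      show "z j = y j" using C(5)[OF jA] hz jJ Jpos[OF jJ] Jlt[OF jJ] psi0[OF jJ] by blast
    qed (use JA zeroJ sumJ True Jpos Jlt psi0 in auto)
    then show ?thesis unfolding F_def s_def A_def by blast
  next
    case False
    hence S1: "S = 1" using S_le by simp
    then obtain j0 where j0: "j0 \<in> J" using sumJ by fastforce
    have j0A: "j0 \<in> A" using j0 JA by auto
    have j0m: "j0 \<in> {1..m}" using j0A Am by auto
    define \<kappa> where "\<kappa> = y j0 powr (a i - 1) * psi (F j0) (a i) (y j0) (s j0)"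
    have \<kappa>nn: "0 \<le> \<kappa>"
    proof (rule ccontr)
      assume "\<not> 0 \<le> \<kappa>"
      then obtain d where d: "d > 0" "\<forall>h>0. h < d \<longrightarrow> G j0 (y j0) < G j0 (y j0 - h)"
        using DERIV_neg_dec_left[OF Jderiv[OF j0]] \<kappa>_def by force
      define h where "h = min d (y j0) / 2"
      have h: "0 < h" "h < d" "h < y j0" using d Jpos[OF j0] h_def by auto
      have "y(j0 := y j0 - h) \<in> constraint R p a k n m i x"
      proof (rule feas)
        show "\<forall>l\<in>{1..m}. 0 \<le> (y(j0 := y j0 - h)) l \<and> (l \<in> A \<longrightarrow> (y(j0 := y j0 - h)) l \<le> omega (F l) - s l) \<and>
            (l \<notin> A \<longrightarrow> (y(j0 := y j0 - h)) l = 0)" using yc h j0A Jlt[OF j0] by auto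
        show "(\<Sum>l\<in>{1..m}. (y(j0 := y j0 - h)) l) \<le> 1" using upd(2)[OF j0m] h S1 S_def by auto
      qed
      from best[OF this] have "G j0 (y j0 - h) \<le> G j0 (y j0)" using upd(1)[OF j0m] by simp
      with d h show False by force
    qed
    have phiJ: "y j powr (a i - 1) * psi (F j) (a i) (y j) (s j) = \<kappa>" if jJ: "j \<in> J" for j
    proof (cases "j = j0")
      case True then show ?thesis using \<kappa>_def by simp
    next
      case ne: False
      have jA: "j \<in> A" using jJ JA by auto
      have jm: "j \<in> {1..m}" using jA Am by auto
      define H where "H = (\<lambda>h. G j (y j + h) + G j0 (y j0 - h))"
      have dH: "(H has_real_derivative
          y j powr (a i - 1) * psi (F j) (a i) (y j) (s j) + - \<kappa>) (at 0)"
        unfolding H_def \<kappa>_def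
        using DERIV_add[OF shift_deriv(1)[OF Jderiv[OF jJ]] shift_deriv(2)[OF Jderiv[OF j0]]] .
      define d where "d = min (min (y j) (omega (F j) - s j - y j)) (min (y j0) (omega (F j0) - s j0 - y j0))"
      have d: "0 < d" using Jpos[OF jJ] Jlt[OF jJ] Jpos[OF j0] Jlt[OF j0] d_def by auto
      have "\<forall>h. \<bar>0 - h\<bar> < d \<longrightarrow> H h \<le> H 0"
      proof (intro allI impI)
        fix h assume hh: "\<bar>0 - h\<bar> < d"
        define z where "z = (y(j := y j + h))(j0 := y j0 - h)"
        have "z \<in> constraint R p a k n m i x"
        proof (rule feas)
          show "\<forall>l\<in>{1..m}. 0 \<le> z l \<and> (l \<in> A \<longrightarrow> z l \<le> omega (F l) - s l) \<and>
              (l \<notin> A \<longrightarrow> z l = 0)" using yc hh jA j0A d_def ne unfolding z_def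
            by (auto simp: abs_less_iff)
          show "(\<Sum>l\<in>{1..m}. z l) \<le> 1" unfolding z_def
            using upd(2)[OF j0m, of "y(j := y j + h)"] upd(2)[OF jm, of y] ne S1 S_def by simp
        qed
        from best[OF this] show "H h \<le> H 0" unfolding z_def H_def
          using upd(1)[OF j0m, of "y(j := y j + h)"] upd(1)[OF jm, of y] ne by simp
      qed
      from DERIV_local_max[OF dH d this] show ?thesis by simp
    qed
    have "J \<subseteq> A \<and> \<kappa> \<ge> 0 \<and> (\<forall>j\<in>A - J. y j = 0) \<and> (\<Sum>j\<in>J. y j) = 1 \<and>
        (\<forall>j\<in>J. 0 < y j \<and> y j < omega (F j) - s j \<and>
           y j powr (a i - 1) * psi (F j) (a i) (y j) (s j) = \<kappa>) \<and>
        (\<forall>z. ((\<Sum>j\<in>J. z j) = 1 \<and>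
              (\<forall>j\<in>J. 0 < z j \<and> z j < omega (F j) - s j \<and>
               z j powr (a i - 1) * psi (F j) (a i) (z j) (s j) = \<kappa>))
             \<longrightarrow> (\<forall>j\<in>J. z j = y j))"
    proof (intro conjI allI impI ballI)
      fix z j assume hz: "(\<Sum>j\<in>J. z j) = 1 \<and> (\<forall>j\<in>J. 0 < z j \<and> z j < omega (F j) - s j \<and>
               z j powr (a i - 1) * psi (F j) (a i) (z j) (s j) = \<kappa>)"
        and jJ: "j \<in> J"
      have jA: "j \<in> A" using JA jJ by auto
      show "z j = y j" using C(6)[OF jA] hz jJ Jpos[OF jJ] Jlt[OF jJ] phiJ[OF jJ] \<kappa>nn by blast
    qed (use JA zeroJ sumJ S1 Jpos Jlt phiJ \<kappa>nn in auto)
    then show ?thesis unfolding F_def s_def A_def by blast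
  qed
qed

end
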